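(* Let $\delta\in(0,\frac14]$ and let $h:[0,\delta]\to\mathbb{R}$ be continuous with $h(0)=0$ and $h(\delta)=1$. Then there exist $\bar r\in(0,\delta)$ and a smooth function $l:[0,\delta]\to\mathbb{R}$ such that $h-l$ attains a local minimum at $\bar r$ and $$l'(\bar r)\geq\frac{1}{4\delta}\qquad\text{and}\qquad \frac{l''(\bar r)}{1+(l'(\bar r))^2}\geq -2\,l'(\bar r).$$ *)

theory Defs
  imports "HOL-Analysis.Analysis"
begin

text \<open>A function is smooth on a set S if it is infinitely differentiable on some
open neighbourhood of S (for S a closed interval this is the usual notion of a
smooth function on the closed interval).\<close>
definition smooth_on :: "real set \<Rightarrow> (real \<Rightarrow> real) \<Rightarrow> bool" where
  "smooth_on S f \<longleftrightarrow>
     (\<exists>U. open U \<and> S \<subseteq> U \<and> (\<forall>n. ((deriv ^^ n) f) differentiable_on U))"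

end

theory Submission
  imports Defs "HOL-Complex_Analysis.Complex_Analysis"
begin


lemma re_holo_deriv:
  assumes "G holomorphic_on S" "open S" "of_real x \<in> S"
  shows "((\<lambda>t. Re (G (of_real t))) has_real_derivative Re (deriv G (of_real x))) (at x)"
proof -
  have "(G has_field_derivative deriv G (of_real x)) (at (of_real x))"
    using assms by (meson holomorphic_derivI)
  then have "((\<lambda>t. G (of_real t)) has_vector_derivative deriv G (of_real x)) (at x)"
    by (rule has_vector_derivative_real_field)
  then have "((\<lambda>t. Re (G (of_real t))) has_vector_derivative Re (deriv G (of_real x))) (at x)"
    by (rule bounded_linear.has_vector_derivative[OF bounded_linear_Re])
  then show ?thesis by (simp add: has_real_derivative_iff_has_vector_derivative)
qed

lemma smooth_Re_holo:
  assumes "F holomorphic_on S" "open S" "\<And>x::real. of_real x \<in> S"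
  shows "smooth_on A (\<lambda>x. Re (F (of_real x)))"
proof -
  have eq: "(deriv ^^ n) (\<lambda>x. Re (F (of_real x))) = (\<lambda>x. Re ((deriv ^^ n) F (of_real x)))" for n
  proof (induction n)
    case 0 then show ?case by simp
  next
    case (Suc n)
    have "deriv (\<lambda>x. Re ((deriv ^^ n) F (of_real x))) x = Re ((deriv ^^ Suc n) F (of_real x))" for x
      using re_holo_deriv[OF holomorphic_higher_deriv[OF assms(1,2)] assms(2,3), of n x]
      by (simp add: DERIV_imp_deriv)
    moreover have "(deriv ^^ Suc n) (\<lambda>x. Re (F (of_real x))) = deriv (\<lambda>x. Re ((deriv ^^ n) F (of_real x)))"
      using Suc.IH by simp
    ultimately show ?case by (simp only: fun_eq_iff) simp
  qed
  have "((deriv ^^ n) (\<lambda>x. Re (F (of_real x)))) differentiable_on UNIV" for n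
    unfolding eq differentiable_on_def
    using re_holo_deriv[OF holomorphic_higher_deriv[OF assms(1,2)] assms(2,3), of n]
    by (meson differentiable_at_withinI real_differentiable_def)
  then show ?thesis unfolding smooth_on_def by (intro exI[of _ UNIV]) auto
qed



lemma l_val:
  fixes a \<eta> \<kappa> x :: real
  assumes "\<eta> > 0"
  defines "F \<equiv> \<lambda>z. csqrt (z - of_real a + \<i> * of_real \<eta>) + of_real \<kappa> * z"
  shows "Re (F (of_real x)) = sqrt ((sqrt ((x-a)^2+\<eta>^2) + (x-a))/2) + \<kappa> * x"
  using assms by (simp add: F_def cmod_def)

lemma F_props:
  fixes a \<eta> \<kappa> :: real
  assumes "\<eta> > 0"
  assumes F_def: "F = (\<lambda>z. csqrt (z - of_real a + \<i> * of_real \<eta>) + of_real \<kappa> * z)"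
  assumes S_def: "S = {z. - \<eta> < Im z}"
  shows "F holomorphic_on S" "open S" 
    "\<And>z. z \<in> S \<Longrightarrow> (F has_field_derivative (1 / (2 * csqrt (z - of_real a + \<i> * of_real \<eta>)) + of_real \<kappa>)) (at z)"
    "\<And>z. z \<in> S \<Longrightarrow> ((\<lambda>z. 1 / (2 * csqrt (z - of_real a + \<i> * of_real \<eta>)) + of_real \<kappa>) has_field_derivative
         (- 1 / (4 * csqrt (z - of_real a + \<i> * of_real \<eta>) ^ 3))) (at z)"
proof -
  have nr: "z - of_real a + \<i> * of_real \<eta> \<notin> \<real>\<^sub>\<le>\<^sub>0" if "z \<in> S" for z
    using that by (auto simp: S_def complex_nonpos_Reals_iff)
  show "F holomorphic_on S" unfolding F_def
    by (intro holomorphic_intros nr)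
  show "open S" unfolding S_def by (rule open_halfspace_Im_gt)
  fix z assume z: "z \<in> S"
  show "(F has_field_derivative (1 / (2 * csqrt (z - of_real a + \<i> * of_real \<eta>)) + of_real \<kappa>)) (at z)"
    unfolding F_def using nr[OF z]
    by (auto intro!: derivative_eq_intros)
  have ne: "csqrt (z - of_real a + \<i> * of_real \<eta>) \<noteq> 0" using nr[OF z] by auto
  show "((\<lambda>z. 1 / (2 * csqrt (z - of_real a + \<i> * of_real \<eta>)) + of_real \<kappa>) has_field_derivative
         (- 1 / (4 * csqrt (z - of_real a + \<i> * of_real \<eta>) ^ 3))) (at z)"
    using nr[OF z] ne
    by (auto intro!: derivative_eq_intros simp: field_simps power3_eq_cube power2_eq_square)
qed

lemma jet_ineq:
  fixes c :: complex and \<kappa> :: real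
  assumes "c \<noteq> 0" "Re c \<ge> 0" "\<kappa> \<ge> 0"
  defines "D1 \<equiv> Re (1 / (2 * c) + of_real \<kappa>)"
  defines "D2 \<equiv> Re (- 1 / (4 * c ^ 3))"
  shows "D1 \<ge> \<kappa>" "D2 / (1 + D1^2) \<ge> - 2 * D1"
proof -
  obtain p q where c: "c = Complex p q" by (cases c)
  have N: "p^2 + q^2 > 0" using assms(1) c by (auto simp: complex_eq_iff sum_power2_gt_zero_iff)
  have p: "p \<ge> 0" using assms c by simp
  define v where "v = p / (2 * (p^2+q^2))"
  have v: "v \<ge> 0" using p N by (simp add: v_def)
  have r1: "Re (1 / (2 * c)) = (2*p) / ((2*p)^2 + (2*q)^2)"
    by (simp only: Re_divide) (simp add: c)
  have e1: "(2*p)^2 + (2*q)^2 = 2 * (2 * (p^2+q^2))" by (simp add: power2_eq_square algebra_simps)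
  have D1: "D1 = v + \<kappa>"
  proof -
    have "D1 = (2*p) / (2*(2*(p^2+q^2))) + \<kappa>"
      unfolding D1_def plus_complex.sel Re_complex_of_real r1 e1 by (rule refl)
    also have "(2*p) / (2*(2*(p^2+q^2))) = v" unfolding v_def by (rule mult_divide_mult_cancel_left) simp
    finally show ?thesis .
  qed
  have D2: "D2 = - (p^3 - 3*p*q^2) / (4 * (p^2+q^2)^3)"
  proof -
    define A where "A = p^3 - 3*p*q^2"
    define B where "B = 3*p^2*q - q^3"
    have c3: "c^3 = Complex A B"
      by (simp add: A_def B_def c power3_eq_cube power2_eq_square complex_eq_iff algebra_simps)
    have id: "A^2 + B^2 = (p^2+q^2)^3"
      unfolding A_def B_def by algebra
    have r2: "D2 = (- (4*A)) / ((4*A)^2 + (4*B)^2)"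
      unfolding D2_def c3 by (simp only: Re_divide) simp
    have e2: "(4*A)^2 + (4*B)^2 = 4 * (4 * (A^2+B^2))" by (simp add: power2_eq_square algebra_simps)
    have "D2 = (4 * (-A)) / (4 * (4 * (A^2+B^2)))" unfolding r2 e2 by (simp only: mult_minus_right)
    also have "\<dots> = (-A) / (4*(A^2+B^2))" by (rule mult_divide_mult_cancel_left) simp
    also have "\<dots> = - (p^3 - 3*p*q^2) / (4 * (p^2+q^2)^3)" using id by (simp only: A_def)
    finally show ?thesis .
  qed
  show "D1 \<ge> \<kappa>" using D1 v by simp
  have "D2 \<ge> - 2 * v^3"
  proof -
    have "3*p*q^2 \<ge> 0" using p by simp
    then have "- (p^3 - 3*p*q^2) / (4 * (p^2+q^2)^3) \<ge> - (p^3) / (4 * (p^2+q^2)^3)"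
      using N by (intro divide_right_mono) auto
    moreover have "2 * v^3 = p^3 / (4 * (p^2+q^2)^3)"
    proof -
      have g: "2 * (p / (2 * X))^3 = p^3 / (4 * X^3)" for X :: real
      proof -
        have "2 * (p / (2 * X))^3 = (2 * p^3) / (2 * (4 * X^3))"
          by (simp add: power_divide power_mult_distrib)
        also have "\<dots> = p^3 / (4 * X^3)" by (rule mult_divide_mult_cancel_left) simp
        finally show ?thesis .
      qed
      show ?thesis unfolding v_def by (rule g)
    qed
    ultimately show ?thesis unfolding D2 by simp
  qed
  moreover have "v^3 \<le> D1^3" using D1 v assms(3) by (simp add: power_mono)
  moreover have "D1^3 \<le> D1 * (1 + D1^2)" using D1 v assms(3) by (simp add: power3_eq_cube power2_eq_square algebra_simps)
  ultimately have "D2 \<ge> -2 * D1 * (1 + D1^2)" by linarith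
  then show "D2 / (1 + D1^2) \<ge> - 2 * D1"
    by (simp add: pos_le_divide_eq add_pos_nonneg)
qed

theorem lemma2p5:
  fixes \<delta> :: real and h :: "real \<Rightarrow> real"
  assumes "0 < \<delta>" and "\<delta> \<le> 1/4"
    and "continuous_on {0..\<delta>} h"
    and "h 0 = 0" and "h \<delta> = 1"
  shows "\<exists>r l. r \<in> {0<..<\<delta>} \<and> smooth_on {0..\<delta>} l
    \<and> (\<exists>e>0. \<forall>y\<in>{0..\<delta>}. \<bar>y - r\<bar> < e \<longrightarrow> h r - l r \<le> h y - l y)
    \<and> deriv l r \<ge> 1 / (4 * \<delta>)
    \<and> deriv (deriv l) r / (1 + (deriv l r)\<^sup>2) \<ge> - 2 * deriv l r"
proof -
  define \<kappa> where "\<kappa> = 1 / (4 * \<delta>)"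
  have \<kappa>pos: "\<kappa> > 0" using assms(1) by (simp add: \<kappa>_def)
  have \<kappa>\<delta>: "\<kappa> * \<delta> = 1/4" using assms(1) by (simp add: \<kappa>_def)
  have "0 \<in> {0..\<delta>}" using assms(1) by simp
  from continuous_on_iff[THEN iffD1, OF assms(3), rule_format, OF this, of "1/8"]
  obtain d where d: "d > 0" "\<forall>x\<in>{0..\<delta>}. dist x 0 < d \<longrightarrow> dist (h x) (h 0) < 1/8"
    by auto
  define x1 where "x1 = min \<delta> (d/2)"
  have x1: "0 < x1" "x1 \<le> \<delta>" using d assms(1) by (auto simp: x1_def)
  have hx1: "h x < 1/8" if "x \<in> {0..x1}" for x
  proof -
    have "x \<in> {0..\<delta>}" "dist x 0 < d" using that x1 d by (auto simp: x1_def dist_real_def)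
    then have "dist (h x) (h 0) < 1/8" using d by blast
    then show ?thesis using assms(4) by (simp add: dist_real_def)
  qed
  define n where "n = nat \<lceil>1/(16*x1)\<rceil> + 1"
  have n1: "n \<ge> 1" by (simp add: n_def)
  have "real n \<ge> 1/(16*x1)" unfolding n_def by linarith
  then have nx1: "real n * x1 \<ge> 1/16" using x1 by (simp add: field_simps)
  define \<Delta> where "\<Delta> = x1 / real n"
  have \<Delta>: "\<Delta> > 0" "real n * \<Delta> = x1" using n1 x1 by (auto simp: \<Delta>_def)
  have "\<exists>k<n. h (real (Suc k) * \<Delta>) - h (real k * \<Delta>) < sqrt \<Delta> / 2"
  proof (rule ccontr)
    assume "\<not> ?thesis"
    then have H: "\<And>k. k < n \<Longrightarrow> h (real (Suc k) * \<Delta>) - h (real k * \<Delta>) \<ge> sqrt \<Delta> / 2"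
      using not_less by blast
    have ind: "m \<le> n \<Longrightarrow> h (real m * \<Delta>) \<ge> real m * (sqrt \<Delta> / 2)" for m
    proof (induction m)
      case 0 then show ?case using assms(4) by simp
    next
      case (Suc m)
      then have "h (real m * \<Delta>) \<ge> real m * (sqrt \<Delta> / 2)" by simp
      moreover have "h (real (Suc m) * \<Delta>) - h (real m * \<Delta>) \<ge> sqrt \<Delta> / 2" using H Suc.prems by simp
      ultimately show ?case by (simp add: algebra_simps)
    qed
    have "h x1 \<ge> real n * (sqrt \<Delta> / 2)" using ind[of n] \<Delta>(2) by simp
    moreover have "real n * sqrt \<Delta> \<ge> 1/4"
    proof (rule power2_le_imp_le)
      have "(real n * sqrt \<Delta>)^2 = real n * (real n * \<Delta>)" using \<Delta>(1)
        by (simp add: power_mult_distrib power2_eq_square)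
      also have "\<dots> = real n * x1" using \<Delta>(2) by simp
      finally have e: "(real n * sqrt \<Delta>)^2 = real n * x1" .
      show "(1/4)^2 \<le> (real n * sqrt \<Delta>)^2" unfolding e using nx1 by (simp add: power2_eq_square)
    qed (use \<Delta> in simp)
    moreover have "h x1 < 1/8" using hx1 x1 by auto
    ultimately show False by linarith
  qed
  then obtain k where k: "k < n" "h (real (Suc k) * \<Delta>) - h (real k * \<Delta>) < sqrt \<Delta> / 2" by blast
  define a where "a = real k * \<Delta>"
  define b where "b = a + \<Delta>"
  have hab: "h b - h a < sqrt \<Delta> / 2" using k by (simp add: a_def b_def algebra_simps)
  have a0: "0 \<le> a" using \<Delta> by (simp add: a_def)
  have "real (Suc k) * \<Delta> \<le> real n * \<Delta>" using k \<Delta> by (intro mult_right_mono) auto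
  then have bx1: "b \<le> x1" using \<Delta> by (simp add: a_def b_def algebra_simps)
  have hb8: "h b < 1/8" using hx1 bx1 a0 \<Delta> by (simp add: b_def)
  have b\<delta>: "b \<le> \<delta>" using bx1 x1 by simp
  have ab: "a < b" using \<Delta> by (simp add: b_def)
  define \<eta> where "\<eta> = \<Delta> / 2"
  have \<eta>: "\<eta> > 0" using \<Delta> by (simp add: \<eta>_def)
  define F where "F = (\<lambda>z. csqrt (z - of_real a + \<i> * of_real \<eta>) + of_real \<kappa> * z)"
  define S where "S = {z. - \<eta> < Im z}"
  note FP = F_props[OF \<eta> F_def S_def]
  have inS: "of_real x \<in> S" for x :: real using \<eta> by (simp add: S_def)
  define l where "l = (\<lambda>x. Re (F (of_real x)))"
  have lval: "l x = sqrt ((sqrt ((x-a)^2+\<eta>^2) + (x-a))/2) + \<kappa> * x" for x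
    unfolding l_def F_def by (rule l_val[OF \<eta>])
  have smooth: "smooth_on {0..\<delta>} l"
    unfolding l_def by (rule smooth_Re_holo[OF FP(1,2) inS])
  have lder: "(l has_real_derivative Re (deriv F (of_real x))) (at x)" for x
    unfolding l_def by (rule re_holo_deriv[OF FP(1,2) inS])
  have cont_l: "continuous_on {a..\<delta>} l"
    by (intro continuous_at_imp_continuous_on ballI DERIV_isCont[OF lder])
  define g where "g = (\<lambda>y. h y - l y)"
  have cont_g: "continuous_on {a..\<delta>} g"
    unfolding g_def using a0
    by (intro continuous_intros cont_l continuous_on_subset[OF assms(3)]) auto
  obtain r where r: "r \<in> {a..\<delta>}" "\<forall>y\<in>{a..\<delta>}. g r \<le> g y"
    using continuous_attains_inf[OF compact_Icc _ cont_g] ab b\<delta> by auto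
  have la: "l a = sqrt \<Delta> / 2 + \<kappa> * a"
  proof -
    have "sqrt (0 + \<eta>^2) = \<eta>" using \<eta> by simp
    then have "l a = sqrt (\<Delta> / 4) + \<kappa> * a" by (simp add: lval \<eta>_def)
    also have "sqrt (\<Delta> / 4) = sqrt \<Delta> / 2" by (simp add: real_sqrt_divide)
    finally show ?thesis .
  qed
  have lb: "l b \<ge> sqrt \<Delta> + \<kappa> * b"
  proof -
    have "sqrt ((b-a)^2+\<eta>^2) \<ge> sqrt ((b-a)^2)" by (intro real_sqrt_le_mono) simp
    then have "sqrt ((b-a)^2+\<eta>^2) \<ge> \<Delta>" using \<Delta> by (simp add: b_def)
    then have "sqrt ((sqrt ((b-a)^2+\<eta>^2) + (b-a))/2) \<ge> sqrt \<Delta>"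
      by (intro real_sqrt_le_mono) (simp add: b_def)
    then show ?thesis by (simp add: lval)
  qed
  have "sqrt \<Delta> \<ge> 0" using \<Delta> by simp
  then have lb0: "l b \<ge> \<kappa> * b" using lb by linarith
  have l\<delta>: "l \<delta> \<le> 5/8 + \<kappa> * \<delta>"
  proof -
    have U: "0 \<le> \<delta> - a" "\<delta> - a \<le> 1/4" using a0 ab b\<delta> assms(2) by auto
    have "sqrt ((\<delta>-a)^2+\<eta>^2) \<le> sqrt ((\<delta>-a+\<eta>)^2)"
      using U \<eta> by (intro real_sqrt_le_mono) (simp add: power2_eq_square algebra_simps)
    then have "sqrt ((\<delta>-a)^2+\<eta>^2) \<le> \<delta>-a+\<eta>" using U \<eta> by simp
    moreover have "\<eta> \<le> 1/8"
    proof -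
      have "1 * \<Delta> \<le> real n * \<Delta>" by (rule mult_right_mono) (use n1 \<Delta> in auto)
      then show ?thesis using \<Delta>(2) x1 assms(2) by (simp add: \<eta>_def)
    qed
    ultimately have "(sqrt ((\<delta>-a)^2+\<eta>^2) + (\<delta>-a))/2 \<le> 25/64" using U by argo
    moreover have "(5/8::real)^2 = 25/64" by (simp add: power2_eq_square)
    ultimately have "(sqrt ((\<delta>-a)^2+\<eta>^2) + (\<delta>-a))/2 \<le> (5/8)^2" by simp
    then have "sqrt ((sqrt ((\<delta>-a)^2+\<eta>^2) + (\<delta>-a))/2) \<le> 5/8"
      by (intro real_le_lsqrt) auto
    then show ?thesis by (simp add: lval)
  qed
  have "\<kappa> * a \<le> \<kappa> * b" using \<kappa>pos ab by simp
  then have gba: "g b < g a"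
    using hab la lb unfolding g_def by linarith
  have "\<kappa> * b \<ge> 0" using \<kappa>pos a0 ab by simp
  then have gbd: "g b < g \<delta>"
    using l\<delta> lb0 hb8 \<kappa>\<delta> assms(5) unfolding g_def by linarith
  have bin: "b \<in> {a..\<delta>}" using ab b\<delta> by simp
  have "r \<noteq> a" using r bin gba by fastforce
  moreover have "r \<noteq> \<delta>" using r bin gbd by fastforce
  ultimately have rin: "a < r" "r < \<delta>" using r by auto
  have locmin: "\<exists>e>0. \<forall>y\<in>{0..\<delta>}. \<bar>y - r\<bar> < e \<longrightarrow> h r - l r \<le> h y - l y"
  proof (intro exI[of _ "min (r - a) (\<delta> - r)"] conjI ballI impI)
    show "min (r - a) (\<delta> - r) > 0" using rin by simp
    fix y assume "y \<in> {0..\<delta>}" "\<bar>y - r\<bar> < min (r - a) (\<delta> - r)"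
    then have "y \<in> {a..\<delta>}" by auto
    then show "h r - l r \<le> h y - l y" using r unfolding g_def by blast
  qed
  define c where "c = csqrt (of_real r - of_real a + \<i> * of_real \<eta>)"
  have "complex_of_real r - complex_of_real a + \<i> * complex_of_real \<eta> \<noteq> 0"
    using \<eta> by (simp add: complex_eq_iff)
  then have c0: "c \<noteq> 0" unfolding c_def csqrt_eq_0 .
  have cre: "Re c \<ge> 0" using csqrt_principal[of "complex_of_real r - complex_of_real a + \<i> * complex_of_real \<eta>"]
    unfolding c_def[symmetric] by linarith
  have dF: "deriv F z = 1 / (2 * csqrt (z - of_real a + \<i> * of_real \<eta>)) + of_real \<kappa>" if "z \<in> S" for z
    using FP(3)[OF that] by (rule DERIV_imp_deriv)
  have dl: "deriv l = (\<lambda>x. Re (deriv F (of_real x)))"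
    using lder by (simp add: fun_eq_iff DERIV_imp_deriv)
  have ddF: "deriv (deriv F) (of_real r) = - 1 / (4 * c ^ 3)"
  proof -
    have "(deriv F has_field_derivative (- 1 / (4 * c ^ 3))) (at (of_real r))"
      using has_field_derivative_transform_within_open[OF FP(4)[OF inS[of r]] FP(2) inS[of r]] dF
      by (simp add: c_def)
    then show ?thesis by (rule DERIV_imp_deriv)
  qed
  have dF_holo: "deriv F holomorphic_on S" using FP(1,2) by (rule holomorphic_deriv)
  have ddl: "deriv (deriv l) r = Re (- 1 / (4 * c ^ 3))"
    unfolding dl using re_holo_deriv[OF dF_holo FP(2) inS[of r]] ddF
    by (simp add: DERIV_imp_deriv)
  have d1: "deriv l r = Re (1 / (2 * c) + of_real \<kappa>)"
    using dl dF[OF inS[of r]] by (simp add: c_def)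
  note J = jet_ineq[OF c0 cre less_imp_le[OF \<kappa>pos]]
  have G1: "r \<in> {0<..<\<delta>}" using rin a0 by simp
  have G4: "deriv l r \<ge> 1 / (4 * \<delta>)" using J(1) d1 by (simp add: \<kappa>_def)
  have G5: "deriv (deriv l) r / (1 + (deriv l r)\<^sup>2) \<ge> - 2 * deriv l r" using J(2) d1 ddl by simp
  show ?thesis
    apply (rule exI[of _ r])
    apply (rule exI[of _ l])
    by (intro conjI G1 smooth locmin G4 G5)
qed

end
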